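(* For $\beta>0$, $r\ge 0$ and $z\in\mathbb{C}$, \[ \sum_{k=0}^\infty\frac{He_k(z)\,(-r)^k}{\Gamma(\beta+k/2)\,k!}=\sum_{k=0}^\infty\frac{{}_0F_1(\beta+k/2;\,-r^2/2)\,(-rz)^k}{\Gamma(\beta+k/2)\,k!}. \] Moreover, for fixed $z$, the function $x\mapsto x^{\beta-1}K_\beta(\sqrt x,z)$ ($x>0$), where $K_\beta$ denotes this common value, has Laplace transform $t\mapsto t^{-\beta}\exp(-z/\sqrt t)\exp(-1/(2t))$, $t>0$.
   Context: $He_k(z)=(-1)^k\varphi^{(k)}(z)/\varphi(z)$ with $\varphi$ the standard normal density (probabilists' Hermite polynomials); ${}_0F_1(b;w)=\sum_{j\ge0}\frac{w^j}{(b)_j\,j!}$ is the confluent hypergeometric limit function. *)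

theory Defs
  imports "HOL-Analysis.Analysis"
begin

definition std_normal_density :: "complex \<Rightarrow> complex" where
  "std_normal_density z = exp (- (z^2) / 2) / complex_of_real (sqrt (2 * pi))"

definition hermite_He :: "nat \<Rightarrow> complex \<Rightarrow> complex" where
  "hermite_He k z = (-1) ^ k * (deriv ^^ k) std_normal_density z / std_normal_density z"

definition hyp0F1 :: "real \<Rightarrow> real \<Rightarrow> real" where
  "hyp0F1 b w = (\<Sum>j. w ^ j / (pochhammer b j * fact j))"

definition lhs_term :: "real \<Rightarrow> real \<Rightarrow> complex \<Rightarrow> nat \<Rightarrow> complex" where
  "lhs_term \<beta> r z k = hermite_He k z * complex_of_real ((- r) ^ k)
      / complex_of_real (Gamma (\<beta> + real k / 2) * fact k)"

definition rhs_term :: "real \<Rightarrow> real \<Rightarrow> complex \<Rightarrow> nat \<Rightarrow> complex" where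
  "rhs_term \<beta> r z k = complex_of_real (hyp0F1 (\<beta> + real k / 2) (- (r^2) / 2))
      * (- (complex_of_real r * z)) ^ k
      / complex_of_real (Gamma (\<beta> + real k / 2) * fact k)"

definition K_beta :: "real \<Rightarrow> real \<Rightarrow> complex \<Rightarrow> complex" where
  "K_beta \<beta> r z = (\<Sum>k. lhs_term \<beta> r z k)"

end

theory Submission
  imports Defs
begin

definition cf :: "nat \<Rightarrow> nat \<Rightarrow> real" where
  "cf k j = (if 2*j \<le> k then (-1)^j * fact k / (fact j * fact (k-2*j) * 2^j) else 0)"

definition H :: "nat \<Rightarrow> complex \<Rightarrow> complex" where
  "H k z = (\<Sum>j\<le>k. of_real (cf k j) * z^(k-2*j))"

definition HD :: "nat \<Rightarrow> complex \<Rightarrow> complex" where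
  "HD k z = (\<Sum>j\<le>k. of_real (cf k j) * (of_nat (k-2*j) * z^(k-2*j-1)))"

lemma H_deriv: "(H k has_field_derivative HD k z) (at z)"
  unfolding H_def[abs_def] HD_def
  by (auto intro!: derivative_eq_intros intro: sum.cong simp: mult_ac)

lemma aux_cf: fixes x G p F s :: real assumes "G>0" "p>0" "x\<ge>0"
  shows "-s * ((2*x+2)*((2*x+1)*F)) / ((x+1)*G*1*(2*p)) = 0 - s*((2*x+1)*F)/(G*1*p)"
proof -
  have "(x+1)*G*1*(2*p) = (x+1) * (2*(G*p))" by simp
  moreover have "-s * ((2*x+2)*((2*x+1)*F)) = (x+1) * (2*(-s*((2*x+1)*F)))" by (simp add: algebra_simps)
  ultimately have "-s * ((2*x+2)*((2*x+1)*F)) / ((x+1)*G*1*(2*p)) = (2*(-s*((2*x+1)*F)))/(2*(G*p))"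
    using assms by (simp only:) (rule mult_divide_mult_cancel_left, simp)
  then show ?thesis by simp
qed

lemma aux2_cf: fixes x Y G p M N s :: real assumes "G>0" "p>0" "M>0" "x>0" "Y>0"
  shows "-s*((x+2*Y)*N)/((Y*G)*(x*M)*(2*p)) = -s*N/((Y*G)*M*(2*p)) - s*N/(G*(x*M)*p)"
proof -
  have ne: "Y \<noteq> 0" "G\<noteq>0" "p\<noteq>0" "M\<noteq>0" "x\<noteq>0" using assms by auto
  show ?thesis using ne by (simp add: field_simps)
qed

lemma cf_rec: "cf (Suc k) (Suc i) = cf k (Suc i) - cf k i * real (k - 2*i)"
proof (cases "2*(Suc i) \<le> Suc k")
  case True
  then obtain m where k: "k = m + 2*i + 1" by (intro that[of "k - 2*i - 1"]) simp
  show ?thesis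
  proof (cases m)
    case 0
    have k2: "k = Suc (2*i)" using k 0 by simp
    have L0: "cf (Suc k) (Suc i) = (-1)^(Suc i) * fact (Suc (Suc (2*i))) / (fact (Suc i) * 2^(Suc i))"
      unfolding cf_def k2 by simp
    have R1: "cf k (Suc i) = 0" unfolding cf_def k2 by simp
    have R2: "cf k i * real (k - 2*i) = (-1)^i * fact (Suc (2*i)) / (fact i * 1 * 2^i)"
      unfolding cf_def k2 by simp
    have a: "fact (Suc (Suc (2*i))) = (2*real i+2)*((2*real i+1)*(fact (2*i)::real))"
      by (simp only: fact_Suc) (simp add: algebra_simps)
    have b: "fact (Suc (2*i)) = (2*real i+1)*(fact (2*i)::real)" by (simp only: fact_Suc; simp)
    have c: "fact (Suc i) = (real i+1)*(fact i::real)" by (simp only: fact_Suc) (simp add: algebra_simps)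
    have L: "cf (Suc k) (Suc i) = -((-1)^i) * ((2*real i+2)*((2*real i+1)*fact(2*i))) / ((real i+1)*fact i*1*(2*2^i))"
      by (simp only: L0 a c power_Suc)
    show ?thesis unfolding L R1 R2 b
      by (rule aux_cf) auto
  next
    case (Suc m')
    have e1: "Suc k - 2 * Suc i = m" "k - 2 * Suc i = m'" "k - 2*i = Suc m" "2 * Suc i \<le> Suc k" "2 * Suc i \<le> k" "2*i \<le> k"
      using k Suc by auto
    have L0: "cf (Suc k) (Suc i) = (-1)^(Suc i) * fact (Suc k) / (fact (Suc i) * fact m * 2^(Suc i))"
      unfolding cf_def e1 using e1 by simp
    have R1: "cf k (Suc i) = (-1)^(Suc i) * fact k / (fact (Suc i) * fact m' * 2^(Suc i))"
      unfolding cf_def using e1 by simp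
    have fm1: "fact (Suc m) = (real m + 1) * (fact m :: real)" by (simp only: fact_Suc) (simp add: algebra_simps)
    have R2: "cf k i * real (k - 2*i) = (-1)^i * fact k / (fact i * fact m * 2^i)"
    proof -
      have "cf k i * real (k - 2*i) = (-1)^i * fact k / (fact i * ((real m + 1) * fact m) * 2^i) * (real m + 1)"
        unfolding cf_def using e1 fm1 by simp
      then show ?thesis by simp
    qed
    have a: "fact (Suc k) = (real m + 2*(real i + 1)) * (fact k :: real)"
      by (simp only: fact_Suc k) (simp add: algebra_simps)
    have c: "fact (Suc i) = (real i+1)*(fact i::real)" by (simp only: fact_Suc) (simp add: algebra_simps)
    have dm: "fact m = real m * (fact m'::real)" using Suc by (simp add: algebra_simps)
    have L: "cf (Suc k) (Suc i) = -((-1)^i) * ((real m + 2*(real i + 1)) * fact k) / (((real i+1)*fact i)*(real m * fact m')*(2*2^i))"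
      by (simp only: L0 a c dm power_Suc; simp)
    have R1': "cf k (Suc i) = -((-1)^i) * fact k / (((real i+1)*fact i)*fact m'*(2*2^i))"
      by (simp only: R1 c power_Suc; simp)
    have R2': "cf k i * real (k - 2*i) = (-1)^i * fact k / (fact i * (real m * fact m') * 2^i)"
      by (simp only: R2 dm)
    show ?thesis unfolding L R1' R2'
      by (rule aux2_cf) (use Suc in auto)
  qed
next
  case False
  then show ?thesis unfolding cf_def by (auto simp: le_Suc_eq)
qed

lemma cf_0: "cf k 0 = 1" unfolding cf_def by simp

lemma cf_big: "k < 2*j \<Longrightarrow> cf k j = 0" unfolding cf_def by simp

lemma H_rec: "H (Suc k) z = z * H k z - HD k z"
proof -
  define d where "d j = (if j = 0 then 0 else cf k (j-1) * real (k - 2*(j-1)))" for j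
  have "H (Suc k) z = (\<Sum>j\<le>Suc k. of_real (cf k j - d j) * z^(Suc k - 2*j))"
    unfolding H_def
  proof (rule sum.cong[OF refl])
    fix j assume "j \<in> {..Suc k}"
    show "of_real (cf (Suc k) j) * z^(Suc k - 2*j) = of_real (cf k j - d j) * z^(Suc k - 2*j)"
      by (cases j) (simp_all add: d_def cf_0 cf_rec)
  qed
  also have "\<dots> = (\<Sum>j\<le>Suc k. of_real (cf k j) * z^(Suc k - 2*j)) - (\<Sum>j\<le>Suc k. of_real (d j) * z^(Suc k - 2*j))"
    by (simp add: sum_subtractf algebra_simps)
  also have "(\<Sum>j\<le>Suc k. of_real (cf k j) * z^(Suc k - 2*j)) = z * H k z"
  proof -
    have "(\<Sum>j\<le>Suc k. of_real (cf k j) * z^(Suc k - 2*j)) = (\<Sum>j\<le>k. of_real (cf k j) * z^(Suc k - 2*j))"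
      by (simp add: cf_big)
    also have "\<dots> = (\<Sum>j\<le>k. z * (of_real (cf k j) * z^(k - 2*j)))"
    proof (rule sum.cong[OF refl])
      fix j assume "j \<in> {..k}"
      show "of_real (cf k j) * z^(Suc k - 2*j) = z * (of_real (cf k j) * z^(k - 2*j))"
      proof (cases "2*j \<le> k")
        case True
        then have "Suc k - 2*j = Suc (k - 2*j)" by simp
        then show ?thesis by simp
      next
        case False then show ?thesis by (simp add: cf_big)
      qed
    qed
    finally show ?thesis by (simp add: H_def sum_distrib_left)
  qed
  also have "(\<Sum>j\<le>Suc k. of_real (d j) * z^(Suc k - 2*j)) = HD k z"
    unfolding HD_def sum.atMost_Suc_shift by (simp add: d_def algebra_simps)
  finally show ?thesis .
qed

lemma H_0: "H 0 z = 1" unfolding H_def cf_def by simp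

lemma phi_deriv: "(std_normal_density has_field_derivative (- z * std_normal_density z)) (at z)"
  unfolding std_normal_density_def[abs_def]
  by (auto intro!: derivative_eq_intros simp: field_simps)

lemma phi_nz: "std_normal_density z \<noteq> 0"
  unfolding std_normal_density_def by simp

lemma deriv_iter: "(deriv^^k) std_normal_density = (\<lambda>z. (-1)^k * H k z * std_normal_density z)"
proof (induction k)
  case 0
  then show ?case by (simp add: H_0)
next
  case (Suc k)
  show ?case
  proof
    fix z
    have "((\<lambda>z. (-1)^k * H k z * std_normal_density z) has_field_derivative
       ((-1)^k * (HD k z * std_normal_density z + H k z * (- z * std_normal_density z)))) (at z)"
      by (auto intro!: derivative_eq_intros H_deriv phi_deriv simp: algebra_simps)
    then have "deriv (\<lambda>z. (-1)^k * H k z * std_normal_density z) z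
        = (-1)^k * (HD k z * std_normal_density z + H k z * (- z * std_normal_density z))"
      by (rule DERIV_imp_deriv)
    also have "\<dots> = (-1)^(Suc k) * H (Suc k) z * std_normal_density z"
      by (simp add: H_rec algebra_simps)
    finally show "(deriv^^Suc k) std_normal_density z = (-1)^(Suc k) * H (Suc k) z * std_normal_density z"
      using Suc by simp
  qed
qed

lemma hermite_He_H: "hermite_He k z = H k z"
  unfolding hermite_He_def deriv_iter using phi_nz
  by (simp add: field_simps flip: power_mult_distrib)

lemma regroup:
  fixes F :: "nat \<times> nat \<Rightarrow> 'a::banach"
  assumes "(F has_sum S) UNIV"
  shows "(\<lambda>k. \<Sum>j\<le>k div 2. F (k - 2*j, j)) sums S"
proof -
  have "((\<lambda>(k,j). F (k - 2*j, j)) has_sum S) (Sigma UNIV (\<lambda>k. {..k div 2}))"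
  proof -
    have "(F has_sum S) UNIV = ((\<lambda>(k,j). F (k - 2*j, j)) has_sum S) (Sigma UNIV (\<lambda>k. {..k div 2}))"
      by (rule has_sum_reindex_bij_witness[where i="\<lambda>(k,j). (k - 2*j, j)" and j="\<lambda>(m,j). (m + 2*j, j)"])
         auto
    then show ?thesis using assms by simp
  qed
  then have "((\<lambda>k. \<Sum>j\<le>k div 2. F (k - 2*j, j)) has_sum S) UNIV"
    by (rule has_sum_SigmaD[where g="\<lambda>k. \<Sum>j\<le>k div 2. F (k - 2*j, j)"]) (auto intro: has_sum_finiteI)
  then show ?thesis by (rule has_sum_imp_sums)
qed

lemma H_split: "H k z = (\<Sum>j\<le>k div 2. of_real (cf k j) * z^(k-2*j))"
  unfolding H_def
  by (rule sum.mono_neutral_right) (auto simp: cf_big)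

lemma term_eq:
  fixes c :: "nat \<Rightarrow> complex"
  shows "H k z * w^k * c k / fact k =
    (\<Sum>j\<le>k div 2. z^(k-2*j) * w^((k-2*j)+2*j) * c ((k-2*j)+2*j) * (-1)^j / (fact (k-2*j) * fact j * 2^j))"
  unfolding H_split sum_distrib_right sum_divide_distrib
proof (rule sum.cong[OF refl])
  fix j assume "j \<in> {..k div 2}"
  then have j: "2*j \<le> k" by auto
  then have e: "k - 2*j + 2*j = k" by simp
  have cfj: "of_real (cf k j) = ((-1)^j * fact k / (fact j * fact (k-2*j) * 2^j) :: complex)"
    unfolding cf_def using j by simp
  show "of_real (cf k j) * z ^ (k - 2 * j) * w ^ k * c k / fact k =
        z^(k-2*j) * w^((k-2*j)+2*j) * c ((k-2*j)+2*j) * (-1)^j / (fact (k-2*j) * fact j * 2^j)"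
    unfolding e cfj by (simp add: field_simps)
qed

lemma nonneg_sums_has_sum:
  fixes f :: "nat \<Rightarrow> real"
  assumes "\<And>n. f n \<ge> 0" "f sums S"
  shows "(f has_sum S) UNIV"
  using assms by (intro norm_summable_imp_has_sum) (auto simp: sums_iff)

lemma dbl:
  fixes c :: "nat \<Rightarrow> complex" and z w :: complex and C :: real
  assumes cb: "\<And>n. norm (c n) \<le> C"
  defines "T \<equiv> (\<lambda>(m,l). z^m * w^(m+2*l) * c (m+2*l) * (-1)^l / (fact m * fact l * 2^l))"
  shows "(\<lambda>k. H k z * w^k * c k / fact k) sums infsum T UNIV"
    "(\<lambda>m. infsum (\<lambda>l. T (m,l)) UNIV) sums infsum T UNIV"
    "summable (\<lambda>k. norm (H k z * w^k * c k / fact k))"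
    "\<And>m. (\<lambda>l. norm (T (m,l))) summable_on UNIV"
proof -
  define a where "a m = (norm z * norm w)^m / fact m" for m
  define b where "b l = (norm w^2/2)^l / fact l" for l
  have C0: "C \<ge> 0" using cb[of 0] norm_ge_zero[of "c 0"] by linarith
  have a0: "a m \<ge> 0" for m unfolding a_def by simp
  have b0: "b l \<ge> 0" for l unfolding b_def by simp
  have bound: "norm (T (m,l)) \<le> C * a m * b l" for m l
  proof -
    have e1: "norm (T (m,l)) = norm z^m * norm w^(m+2*l) * norm (c (m+2*l)) / (fact m * fact l * 2^l)"
      unfolding T_def by (simp add: norm_mult norm_divide norm_power)
    have e2: "norm w^(m+2*l) = norm w^m * (norm w^2)^l" by (simp add: power_add power_mult)
    have "norm (T (m,l)) = ((norm z * norm w)^m / fact m) * (((norm w^2)^l / 2^l) / fact l) * norm (c (m+2*l))"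
      unfolding e1 e2 by (simp add: power_mult_distrib mult_ac)
    also have "\<dots> = a m * b l * norm (c (m+2*l))"
      unfolding a_def b_def by (simp add: power_divide)
    also have "\<dots> \<le> a m * b l * C" using cb a0 b0 by (intro mult_left_mono) auto
    finally show ?thesis by (simp add: mult_ac)
  qed
  define E where "E = exp (norm w^2/2)"
  have bsum: "(b has_sum E) UNIV"
  proof (rule nonneg_sums_has_sum[OF b0])
    have "(\<lambda>n. (norm w^2/2)^n /\<^sub>R fact n) = b"
      unfolding b_def by (rule ext) (simp only: real_scaleR_def divide_inverse mult.commute)
    then show "b sums E" unfolding E_def using exp_converges[of "norm w^2/2"] by simp
  qed
  have row: "((\<lambda>l. C * a m * b l) has_sum (C * a m * E)) UNIV" for m
    by (rule has_sum_cmult_right[OF bsum])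
  have asum: "summable a"
    using summable_exp[of "norm z * norm w"] unfolding a_def by (simp only: divide_inverse mult.commute)
  have gsum: "(\<lambda>m. C * a m * E) summable_on UNIV"
  proof -
    have "summable (\<lambda>m. C * a m * E)" using summable_mult2[OF summable_mult[OF asum, of C], of E] by simp
    then show ?thesis using C0 a0 by (subst summable_on_UNIV_nonneg_real_iff) (auto simp: E_def)
  qed
  have Psum: "(\<lambda>(m,l). C * a m * b l) summable_on UNIV"
  proof -
    have "(\<lambda>(m,l). C * a m * b l) summable_on Sigma UNIV (\<lambda>_. UNIV)"
      by (rule summable_on_SigmaI[where g="\<lambda>m. C * a m * E"]) (use row gsum C0 a0 b0 in auto)
    then show ?thesis by simp
  qed
  have nT: "(\<lambda>p. norm (T p)) summable_on UNIV"
    by (rule summable_on_comparison_test[OF Psum]) (use bound in auto)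
  then have Tsum: "T summable_on UNIV" by (rule abs_summable_summable)
  then have HS: "(T has_sum infsum T UNIV) UNIV" by (rule has_sum_infsum)
  show "(\<lambda>k. H k z * w^k * c k / fact k) sums infsum T UNIV"
    using regroup[OF HS] by (simp add: term_eq T_def)
  show D: "(\<lambda>l. norm (T (m,l))) summable_on UNIV" for m
    by (rule summable_on_comparison_test[OF has_sum_imp_summable[OF row[of m]]]) (use bound in auto)
  show "(\<lambda>m. infsum (\<lambda>l. T (m,l)) UNIV) sums infsum T UNIV"
  proof -
    have "((\<lambda>m. infsum (\<lambda>l. T (m,l)) UNIV) has_sum infsum T UNIV) UNIV"
    proof (rule has_sum_SigmaD[where B="\<lambda>_. UNIV"])
      show "(T has_sum infsum T UNIV) (UNIV \<times> UNIV)" using HS by simp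
      show "((\<lambda>l. T (m,l)) has_sum infsum (\<lambda>l. T (m,l)) UNIV) UNIV" for m
        using abs_summable_summable[OF D[of m]] by (rule has_sum_infsum)
    qed
    then show ?thesis by (rule has_sum_imp_sums)
  qed
  show "summable (\<lambda>k. norm (H k z * w^k * c k / fact k))"
  proof -
    have "((\<lambda>p. norm (T p)) has_sum infsum (\<lambda>p. norm (T p)) UNIV) UNIV"
      using nT by (rule has_sum_infsum)
    from regroup[OF this] have s: "summable (\<lambda>k. \<Sum>j\<le>k div 2. norm (T (k - 2*j, j)))"
      by (simp add: sums_iff)
    show ?thesis
    proof (rule summable_comparison_test'[OF s])
      fix k :: nat
      have "norm (H k z * w^k * c k / fact k) = norm (\<Sum>j\<le>k div 2. T (k - 2*j, j))"
        by (simp add: term_eq T_def)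
      also have "\<dots> \<le> (\<Sum>j\<le>k div 2. norm (T (k - 2*j, j)))" by (rule norm_sum)
      finally show "norm (norm (H k z * w^k * c k / fact k)) \<le> (\<Sum>j\<le>k div 2. norm (T (k - 2*j, j)))"
        by simp
    qed
  qed
qed

lemma Gamma_ge: assumes "x > (0::real)" shows "Gamma x \<ge> 1/6"
proof -
  have nz: "x \<notin> \<int>\<^sub>\<le>\<^sub>0" "x + 1 \<notin> \<int>\<^sub>\<le>\<^sub>0" using assms by (auto elim!: nonpos_Ints_cases)
  have G2: "Gamma (2::real) = 1" using Gamma_fact[of 1] by simp
  have ge2: "Gamma y \<ge> 1" if "y \<ge> (2::real)" for y
  proof (cases "y = 2")
    case True then show ?thesis using G2 by simp
  next
    case False
    then have "Gamma 2 < Gamma y" using that by (intro Gamma_real_strict_mono) auto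
    then show ?thesis using G2 by simp
  qed
  show ?thesis
  proof (cases "x \<ge> 2")
    case True then show ?thesis using ge2[of x] by simp
  next
    case False
    have "Gamma (x + 2) = (x+1) * (x * Gamma x)"
      using Gamma_plus1[OF nz(2)] Gamma_plus1[OF nz(1)] by (simp add: add.assoc)
    moreover have "Gamma (x+2) \<ge> 1" using ge2 assms by simp
    ultimately have "1 \<le> (x+1) * x * Gamma x" by (simp add: mult.assoc)
    moreover have "(x+1)*x \<le> 3*2" using False assms by (intro mult_mono) auto
    moreover have "Gamma x > 0" using assms by simp
    ultimately have "(x+1)*x*Gamma x \<le> (3*2)*Gamma x" by (intro mult_right_mono) auto
    with \<open>1 \<le> (x+1) * x * Gamma x\<close> have "1 \<le> 6 * Gamma x" by simp
    then show ?thesis by simp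
  qed
qed

definition cG :: "real \<Rightarrow> nat \<Rightarrow> complex" where
  "cG \<beta> n = complex_of_real (1 / Gamma (\<beta> + real n / 2))"

lemma cG_bound: "\<beta> > 0 \<Longrightarrow> norm (cG \<beta> n) \<le> 6"
proof -
  assume b: "\<beta> > 0"
  then have pos: "\<beta> + real n / 2 > 0" by simp
  define g where "g = Gamma (\<beta> + real n / 2)"
  have "g \<ge> 1/6" unfolding g_def by (rule Gamma_ge[OF pos])
  then have "1 / g \<le> 6" "1/g \<ge> 0" by (auto simp: divide_le_eq)
  then show ?thesis unfolding cG_def g_def[symmetric] norm_of_real by simp
qed

lemma lhs_term_eq: "lhs_term \<beta> r z k = H k z * (- of_real r)^k * cG \<beta> k / fact k"
  unfolding lhs_term_def cG_def hermite_He_H by (simp add: field_simps)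

definition hs :: "real \<Rightarrow> real \<Rightarrow> nat \<Rightarrow> real" where
  "hs b x l = x^l / (pochhammer b l * fact l)"

lemma poch_Gamma: "b > 0 \<Longrightarrow> pochhammer b l * Gamma b = Gamma (b + real l)"
proof -
  assume "b > 0"
  then have "b \<notin> \<int>\<^sub>\<le>\<^sub>0" by (auto elim!: nonpos_Ints_cases)
  then have "pochhammer b l = Gamma (b + of_nat l) / Gamma b" by (rule pochhammer_Gamma)
  moreover have "Gamma b \<noteq> 0" using Gamma_real_pos[OF \<open>b > 0\<close>] by simp
  ultimately show ?thesis by simp
qed

lemma hs_sums: assumes "b > 0" shows "hs b x sums hyp0F1 b x"
proof -
  have Gb: "Gamma b > 0" using assms by simp
  have bnd: "norm (hs b x l) \<le> 6 * Gamma b * (\<bar>x\<bar>^l / fact l)" for l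
  proof -
    have pp: "pochhammer b l > 0" using assms by (intro pochhammer_pos)
    have "pochhammer b l * Gamma b \<ge> 1/6" using poch_Gamma[OF assms, of l] Gamma_ge[of "b + real l"] assms by simp
    then have "1 / pochhammer b l \<le> 6 * Gamma b" using pp Gb by (simp add: field_simps)
    then have "\<bar>x\<bar>^l / fact l * (1 / pochhammer b l) \<le> \<bar>x\<bar>^l / fact l * (6 * Gamma b)"
      by (intro mult_left_mono) auto
    moreover have "norm (hs b x l) = \<bar>x\<bar>^l / fact l * (1 / pochhammer b l)"
      unfolding hs_def using pp by (simp add: abs_mult power_abs)
    ultimately show ?thesis by (simp add: mult_ac)
  qed
  have "summable (\<lambda>l. 6 * Gamma b * (\<bar>x\<bar>^l / fact l))"
    using summable_exp[of "\<bar>x\<bar>"] by (intro summable_mult) (simp only: divide_inverse mult.commute)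
  then have "summable (hs b x)" by (rule summable_comparison_test'[where N=0]) (use bnd in auto)
  then show ?thesis unfolding hyp0F1_def hs_def[symmetric] by (rule summable_sums)
qed

lemma row_term:
  assumes "\<beta> > 0"
  shows "z^m * (-complex_of_real r)^(m+2*l) * cG \<beta> (m+2*l) * (-1)^l / (fact m * fact l * 2^l)
   = complex_of_real (hs (\<beta> + real m/2) (-(r^2)/2) l) *
     ((-(complex_of_real r * z))^m / complex_of_real (Gamma (\<beta> + real m/2) * fact m))"
proof -
  define b where "b = \<beta> + real m / 2"
  have b0: "b > 0" unfolding b_def using assms by simp
  define P where "P = pochhammer b l"
  define G where "G = Gamma b"
  have P0: "P > 0" unfolding P_def using b0 by (intro pochhammer_pos)
  have G0: "G > 0" unfolding G_def using b0 by simp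
  have "\<beta> + real (m + 2*l) / 2 = b + real l" unfolding b_def by (simp add: field_simps)
  moreover have pg: "complex_of_real P * complex_of_real G = complex_of_real (Gamma (b + real l))"
    unfolding P_def G_def of_real_mult[symmetric] poch_Gamma[OF b0] ..
  ultimately have c: "cG \<beta> (m+2*l) = 1 / (complex_of_real P * complex_of_real G)"
    unfolding cG_def pg by simp
  have e1: "(-complex_of_real r)^(m+2*l) = (-complex_of_real r)^m * (complex_of_real r^2)^l"
    by (simp add: power_add power_mult)
  have e2: "complex_of_real (hs b (-(r^2)/2) l) = (-1)^l * (complex_of_real r^2)^l / (2^l * (complex_of_real P * fact l))"
  proof -
    have "(-(r^2)/2)^l = (-1)^l * (r^2)^l / 2^l" by (simp only: power_divide power_minus[of "r^2" l])
    then show ?thesis unfolding hs_def P_def[symmetric] by (simp add: mult_ac)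
  qed
  have e3: "(-(complex_of_real r * z))^m = (-complex_of_real r)^m * z^m"
    by (simp only: minus_mult_left power_mult_distrib)
  have fin: "z^m * ((-a)^m * (a^2)^l) * (1 / (P' * G')) * (-1)^l / (fact m * fact l * 2^l)
     = (-1)^l * (a^2)^l / (2^l * (P' * fact l)) * (((-a)^m * z^m) / (G' * fact m))"
    if "P' \<noteq> 0" "G' \<noteq> 0" for a P' G' :: complex
    using that by (simp add: field_simps)
  have nz: "complex_of_real P \<noteq> 0" "complex_of_real G \<noteq> 0" using P0 G0 by auto
  show ?thesis
    unfolding b_def[symmetric] G_def[symmetric] c e1 e2 e3 of_real_mult of_real_fact
    by (rule fin[OF nz])
qed

lemma part1:
  fixes r :: real and z :: complex and \<beta> :: real
  assumes b: "\<beta> > 0"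
  defines "T \<equiv> (\<lambda>(m,l). z^m * (-complex_of_real r)^(m+2*l) * cG \<beta> (m+2*l) * (-1)^l / (fact m * fact l * 2^l))"
  shows "lhs_term \<beta> r z sums infsum T UNIV" "rhs_term \<beta> r z sums infsum T UNIV"
    "summable (\<lambda>k. norm (lhs_term \<beta> r z k))"
proof -
  note D = dbl[of "cG \<beta>" 6 z "-complex_of_real r", OF cG_bound[OF b], folded T_def]
  have lf: "lhs_term \<beta> r z = (\<lambda>k. H k z * (- of_real r)^k * cG \<beta> k / fact k)"
    by (rule ext) (rule lhs_term_eq)
  show "lhs_term \<beta> r z sums infsum T UNIV" unfolding lf by (rule D(1))
  show "summable (\<lambda>k. norm (lhs_term \<beta> r z k))" unfolding lf by (rule D(3))
  have row: "infsum (\<lambda>l. T (m,l)) UNIV = rhs_term \<beta> r z m" for m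
  proof -
    define bb where "bb = \<beta> + real m / 2"
    have bb0: "bb > 0" unfolding bb_def using b by simp
    define K where "K = (-(complex_of_real r * z))^m / complex_of_real (Gamma bb * fact m)"
    have Teq: "T (m,l) = complex_of_real (hs bb (-(r^2)/2) l) * K" for l
      unfolding T_def K_def bb_def using row_term[OF b, of z m r l] by simp
    have "(\<lambda>l. complex_of_real (hs bb (-(r^2)/2) l)) sums complex_of_real (hyp0F1 bb (-(r^2)/2))"
      using hs_sums[OF bb0] by (simp only: sums_of_real_iff)
    then have "(\<lambda>l. complex_of_real (hs bb (-(r^2)/2) l) * K) sums (complex_of_real (hyp0F1 bb (-(r^2)/2)) * K)"
      by (rule sums_mult2)
    then have s: "(\<lambda>l. T (m,l)) sums rhs_term \<beta> r z m"
      unfolding Teq rhs_term_def K_def bb_def by simp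
    have "summable (\<lambda>l. norm (T (m,l)))"
      using D(4)[of m] by (rule summable_on_imp_summable)
    then have "((\<lambda>l. T (m,l)) has_sum rhs_term \<beta> r z m) UNIV"
      using s by (rule norm_summable_imp_has_sum)
    then show ?thesis by (rule infsumI)
  qed
  show "rhs_term \<beta> r z sums infsum T UNIV"
    using D(2) unfolding row .
qed

lemma GI:
  fixes a t :: real
  assumes a: "a > 0" and t: "t > 0"
  shows "has_bochner_integral lebesgue (\<lambda>x. indicator {0<..} x * (exp (- t * x) * x powr (a - 1)))
           (Gamma a * t powr (- a))"
proof -
  define f where "f u = u powr (a - 1) / exp u" for u :: real
  have hi: "(f has_integral Gamma a) {0..}" unfolding f_def by (rule Gamma_integral_real[OF a])
  have ai: "f absolutely_integrable_on {0..}"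
    by (rule nonnegative_absolutely_integrable_1) (use hi in \<open>auto simp: f_def integrable_on_def\<close>)
  have "(LINT x:{0..}|lebesgue. f x) = integral {0..} f"
    by (rule set_lebesgue_integral_eq_integral(2)[OF ai])
  also have "\<dots> = Gamma a" using hi by (rule integral_unique)
  finally have "has_bochner_integral lebesgue (\<lambda>x. indicator {0..} x *\<^sub>R f x) (Gamma a)"
    using ai unfolding set_integrable_def set_lebesgue_integral_def
    by (simp add: has_bochner_integral_iff)
  then have "has_bochner_integral lebesgue (\<lambda>x. indicator {0..} (0 + t * x) *\<^sub>R f (0 + t * x)) (Gamma a /\<^sub>R \<bar>t\<bar>)"
    using t by (subst (asm) has_bochner_integral_lebesgue_real_affine_iff[where c=t and t=0]) auto
  moreover have "indicator {0..} (0 + t * x) *\<^sub>R f (0 + t * x)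
      = t powr (a - 1) * (indicator {0<..} x * (exp (- t * x) * x powr (a - 1)))" for x
  proof (cases "x > 0")
    case True
    then show ?thesis using t
      by (simp add: f_def powr_mult exp_minus field_simps indicator_def)
  next
    case False
    then have "t * x \<le> 0" using t False by (simp add: mult_nonneg_nonpos)
    then show ?thesis using False by (cases "t * x = 0") (auto simp: f_def indicator_def)
  qed
  ultimately have h: "has_bochner_integral lebesgue (\<lambda>x. t powr (a - 1) * (indicator {0<..} x * (exp (- t * x) * x powr (a - 1)))) (Gamma a / t)"
    using t by (simp add: divide_inverse mult.commute)
  have "has_bochner_integral lebesgue (\<lambda>x. t powr (1 - a) * (t powr (a - 1) * (indicator {0<..} x * (exp (- t * x) * x powr (a - 1))))) (t powr (1 - a) * (Gamma a / t))"
    by (rule has_bochner_integral_mult_right) (rule h)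
  moreover have "t powr (1 - a) * (t powr (a - 1) * y) = y" for y
    using t by (simp flip: mult.assoc powr_add)
  moreover have "t powr (1 - a) * (Gamma a / t) = Gamma a * t powr (- a)"
    using t by (simp add: powr_diff powr_minus field_simps)
  ultimately show ?thesis by simp
qed

lemma exp_sums_div: "(\<lambda>n. x^n / fact n) sums exp (x::complex)"
proof -
  have "(\<lambda>n. x^n /\<^sub>R fact n) = (\<lambda>n. x^n / fact n)"
    by (rule ext) (simp add: scaleR_conv_of_real divide_inverse mult.commute)
  then show ?thesis using exp_converges[of x] by simp
qed

lemma GF: "(\<lambda>k. H k z * w^k * 1 / fact k) sums (exp (z*w) * exp (-(w^2)/2))"
proof -
  define T where "T = (\<lambda>(m,l). z^m * w^(m+2*l) * (\<lambda>_. 1::complex) (m+2*l) * (-1)^l / (fact m * fact l * 2^l))"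
  have cb1: "norm ((\<lambda>_. 1::complex) n) \<le> 1" for n by simp
  note D = dbl[of "\<lambda>_. 1" 1 z w, OF cb1, folded T_def]
  have row: "infsum (\<lambda>l. T (m,l)) UNIV = (z*w)^m / fact m * exp (-(w^2)/2)" for m
  proof -
    have Teq: "T (m,l) = (z*w)^m / fact m * ((-(w^2)/2)^l / fact l)" for l
    proof -
      have p1: "(-(w^2)/2)^l = (-1)^l * (w^2)^l / 2^l" by (simp only: power_divide power_minus[of "w^2" l])
      have p2: "w^(m+2*l) = w^m * (w^2)^l" by (simp add: power_add power_mult)
      have g: "z^m * (w^m * W) * 1 * (-1)^l / (fact m * fact l * 2^l) = (z*w)^m / fact m * ((-1)^l * W / 2^l / fact l)"
        for W :: complex by (simp add: power_mult_distrib field_simps)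
      show ?thesis unfolding T_def prod.case p1 p2 by (rule g)
    qed
    have "(\<lambda>l. (z*w)^m / fact m * ((-(w^2)/2)^l / fact l)) sums ((z*w)^m / fact m * exp (-(w^2)/2))"
      by (rule sums_mult[OF exp_sums_div])
    then have s: "(\<lambda>l. T (m,l)) sums ((z*w)^m / fact m * exp (-(w^2)/2))" unfolding Teq .
    have "summable (\<lambda>l. norm (T (m,l)))"
      using D(4)[of m] by (rule summable_on_imp_summable)
    then have "((\<lambda>l. T (m,l)) has_sum ((z*w)^m / fact m * exp (-(w^2)/2))) UNIV"
      using s by (rule norm_summable_imp_has_sum)
    then show ?thesis by (rule infsumI)
  qed
  have "(\<lambda>m. (z*w)^m / fact m * exp (-(w^2)/2)) sums (exp (z*w) * exp (-(w^2)/2))"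
    by (rule sums_mult2[OF exp_sums_div])
  moreover have "(\<lambda>m. (z*w)^m / fact m * exp (-(w^2)/2)) sums infsum T UNIV"
    using D(2) unfolding row .
  ultimately have "infsum T UNIV = exp (z*w) * exp (-(w^2)/2)" by (rule sums_unique2[symmetric])
  then show ?thesis using D(1) by simp
qed

lemma part2:
  fixes \<beta> t :: real and z :: complex
  assumes b: "\<beta> > 0" and t: "t > 0"
  defines "F \<equiv> (\<lambda>x. complex_of_real (exp (- t * x) * x powr (\<beta> - 1)) * K_beta \<beta> (sqrt x) z)"
  shows "F absolutely_integrable_on {0<..} \<and> integral {0<..} F =
     complex_of_real (t powr (- \<beta>)) * exp (- z / complex_of_real (sqrt t)) * complex_of_real (exp (- 1 / (2 * t)))"
proof -
  define S :: "real set" where "S = {0<..}"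
  define a where "a k = \<beta> + real k / 2" for k :: nat
  define Q where "Q k = H k z * (-1)^k * cG \<beta> k / fact k" for k
  define e where "e x = exp (- t * x) * x powr (\<beta> - 1)" for x
  define g where "g k x = indicator S x *\<^sub>R (complex_of_real (e x) * lhs_term \<beta> (sqrt x) z k)" for k x
  define u where "u = t powr (-1/2)"
  have a0: "a k > 0" for k unfolding a_def using b by simp
  have u0: "u > 0" unfolding u_def using t by simp
  have tpow: "t powr (- a k) = t powr (- \<beta>) * u^k" for k
  proof -
    have "u^k = t powr (real k * (-1/2))" unfolding u_def using t by (simp add: powr_power)
    moreover have "- a k = -\<beta> + real k * (-1/2)" unfolding a_def by simp
    ultimately show ?thesis by (simp only: powr_add)
  qed
  have gk: "g k x = Q k * complex_of_real (indicator S x * (exp (- t * x) * x powr (a k - 1)))" for k x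
  proof (cases "x > 0")
    case True
    have sq: "sqrt x ^ k = x powr (real k / 2)"
    proof -
      have "sqrt x = x powr (1/2)" using True by (simp add: powr_half_sqrt)
      then have "sqrt x ^ k = x powr (real k * (1/2))" using True by (simp add: powr_power)
      then show ?thesis by simp
    qed
    have pw: "x powr (\<beta> - 1) * x powr (real k / 2) = x powr (a k - 1)"
      unfolding a_def by (simp add: powr_add[symmetric] algebra_simps)
    have neg: "(- complex_of_real (sqrt x))^k = (-1)^k * complex_of_real (x powr (real k / 2))"
      by (simp add: power_minus[of "complex_of_real (sqrt x)" k] sq flip: of_real_power)
    have "g k x = complex_of_real (e x) * (H k z * ((-1)^k * complex_of_real (x powr (real k / 2))) * cG \<beta> k / fact k)"
      unfolding g_def lhs_term_eq neg S_def using True by simp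
    also have "\<dots> = Q k * complex_of_real (e x * x powr (real k / 2))"
      unfolding Q_def by (simp add: field_simps)
    also have "e x * x powr (real k / 2) = indicator S x * (exp (- t * x) * x powr (a k - 1))"
      unfolding e_def S_def using True pw by (simp add: mult.assoc)
    finally show ?thesis .
  next
    case False
    then show ?thesis unfolding g_def S_def by simp
  qed
  have hb: "has_bochner_integral lebesgue (g k) (Q k * complex_of_real (Gamma (a k) * t powr (- a k)))" for k
  proof -
    have "has_bochner_integral lebesgue (\<lambda>x. Q k * complex_of_real (indicator S x * (exp (- t * x) * x powr (a k - 1))))
        (Q k * complex_of_real (Gamma (a k) * t powr (- a k)))"
      by (intro has_bochner_integral_mult_right has_bochner_integral_of_real)
         (unfold S_def, rule GI[OF a0 t])
    moreover have "g k = (\<lambda>x. Q k * complex_of_real (indicator S x * (exp (- t * x) * x powr (a k - 1))))"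
      by (rule ext) (rule gk)
    ultimately show ?thesis by simp
  qed
  have ng: "norm (g k x) = norm (Q k) * (indicator S x * (exp (- t * x) * x powr (a k - 1)))" for k x
    unfolding gk by (simp add: norm_mult indicator_def)
  have hbn: "has_bochner_integral lebesgue (\<lambda>x. norm (g k x)) (norm (Q k) * (Gamma (a k) * t powr (- a k)))" for k
    unfolding ng by (intro has_bochner_integral_mult_right) (unfold S_def, rule GI[OF a0 t])
  have Gpos: "Gamma (a k) > 0" for k using a0[of k] by simp
  have normcG: "norm (cG \<beta> k) = 1 / Gamma (a k)" for k
    unfolding cG_def norm_of_real a_def[symmetric] using Gpos[of k] by simp
  define w where "w = complex_of_real u"
  have cb1: "norm ((\<lambda>_. 1::complex) n) \<le> 1" for n by simp
  have sw: "summable (\<lambda>k. norm (H k z * w^k * 1 / fact k))"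
    by (rule dbl(3)[of "\<lambda>_. 1" 1 z w, OF cb1])
  have nint: "integral\<^sup>L lebesgue (\<lambda>x. norm (g k x)) = t powr (- \<beta>) * norm (H k z * w^k * 1 / fact k)" for k
  proof -
    have "integral\<^sup>L lebesgue (\<lambda>x. norm (g k x)) = norm (Q k) * (Gamma (a k) * t powr (- a k))"
      using hbn[of k] by (rule has_bochner_integral_integral_eq)
    also have "\<dots> = t powr (- \<beta>) * norm (H k z * w^k * 1 / fact k)"
      unfolding Q_def tpow w_def using Gpos[of k] u0
      by (simp add: norm_mult norm_divide norm_power normcG field_simps)
    finally show ?thesis .
  qed
  have sint: "summable (\<lambda>k. integral\<^sup>L lebesgue (\<lambda>x. norm (g k x)))"
    unfolding nint by (rule summable_mult[OF sw])
  have aes: "AE x in lebesgue. summable (\<lambda>k. norm (g k x))"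
  proof (rule AE_I2)
    fix x :: real
    have "norm (g k x) = \<bar>indicator S x * e x\<bar> * norm (lhs_term \<beta> (sqrt x) z k)" for k
      unfolding g_def by (simp add: norm_mult abs_mult)
    then show "summable (\<lambda>k. norm (g k x))"
      using summable_mult[OF part1(3)[OF b, of "sqrt x" z], of "\<bar>indicator S x * e x\<bar>"] by simp
  qed
  have gint: "integrable lebesgue (g k)" for k using hb[of k] by (rule integrable.intros)
  have sumeq: "(\<lambda>x. indicator S x *\<^sub>R F x) = (\<lambda>x. \<Sum>k. g k x)"
  proof (rule ext)
    fix x :: real
    have sl: "summable (lhs_term \<beta> (sqrt x) z)" using part1(1)[OF b, of "sqrt x" z] by (rule sums_summable)
    have "(\<Sum>k. g k x) = indicator S x *\<^sub>R (\<Sum>k. complex_of_real (e x) * lhs_term \<beta> (sqrt x) z k)"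
      unfolding g_def by (rule suminf_scaleR_right[symmetric]) (rule summable_mult[OF sl])
    also have "(\<Sum>k. complex_of_real (e x) * lhs_term \<beta> (sqrt x) z k) = complex_of_real (e x) * K_beta \<beta> (sqrt x) z"
      unfolding K_beta_def by (rule suminf_mult[OF sl])
    finally show "indicator S x *\<^sub>R F x = (\<Sum>k. g k x)" unfolding F_def e_def by simp
  qed
  have integ: "integrable lebesgue (\<lambda>x. indicator S x *\<^sub>R F x)"
    unfolding sumeq by (rule integrable_suminf[OF gint aes sint])
  have si: "(\<lambda>k. integral\<^sup>L lebesgue (g k)) sums integral\<^sup>L lebesgue (\<lambda>x. indicator S x *\<^sub>R F x)"
    unfolding sumeq by (rule sums_integral[OF gint aes sint])
  define w' where "w' = - complex_of_real u"
  have ival: "integral\<^sup>L lebesgue (g k) = complex_of_real (t powr (- \<beta>)) * (H k z * w'^k * 1 / fact k)" for k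
  proof -
    have "integral\<^sup>L lebesgue (g k) = Q k * complex_of_real (Gamma (a k) * t powr (- a k))"
      using hb[of k] by (rule has_bochner_integral_integral_eq)
    also have "\<dots> = complex_of_real (t powr (- \<beta>)) * (H k z * w'^k * 1 / fact k)"
      unfolding Q_def tpow w'_def cG_def a_def[symmetric] using Gpos[of k]
      by (simp add: power_minus[of "complex_of_real u" k] field_simps)
    finally show ?thesis .
  qed
  have "(\<lambda>k. complex_of_real (t powr (- \<beta>)) * (H k z * w'^k * 1 / fact k)) sums
      (complex_of_real (t powr (- \<beta>)) * (exp (z*w') * exp (-(w'^2)/2)))"
    by (rule sums_mult[OF GF])
  then have val: "integral\<^sup>L lebesgue (\<lambda>x. indicator S x *\<^sub>R F x) = complex_of_real (t powr (- \<beta>)) * (exp (z*w') * exp (-(w'^2)/2))"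
    using si unfolding ival by (rule sums_unique2[symmetric])
  have u_sqrt: "u = 1 / sqrt t" unfolding u_def using t by (simp add: powr_minus_divide powr_half_sqrt[symmetric])
  have e1: "z * w' = - z / complex_of_real (sqrt t)" unfolding w'_def u_sqrt by simp
  have e2: "-(w'^2)/2 = complex_of_real (- 1 / (2 * t))"
    unfolding w'_def u_sqrt using t by (simp add: power_divide field_simps flip: of_real_power)
  have fin: "integral\<^sup>L lebesgue (\<lambda>x. indicator S x *\<^sub>R F x) =
     complex_of_real (t powr (- \<beta>)) * exp (- z / complex_of_real (sqrt t)) * complex_of_real (exp (- 1 / (2 * t)))"
    unfolding val e1 e2 exp_of_real by (simp add: mult.assoc)
  have ai: "F absolutely_integrable_on S" unfolding set_integrable_def by (rule integ)
  have "integral S F = set_lebesgue_integral lebesgue S F"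
    by (rule set_lebesgue_integral_eq_integral(2)[OF ai, symmetric])
  also have "\<dots> = integral\<^sup>L lebesgue (\<lambda>x. indicator S x *\<^sub>R F x)" unfolding set_lebesgue_integral_def ..
  finally show ?thesis using ai fin unfolding S_def by simp
qed

theorem mainTheorem3:
  fixes \<beta> :: real and z :: complex
  assumes "\<beta> > 0"
  shows "(\<forall>r\<ge>0. summable (lhs_term \<beta> r z) \<and> summable (rhs_term \<beta> r z)
             \<and> (\<Sum>k. lhs_term \<beta> r z k) = (\<Sum>k. rhs_term \<beta> r z k))
       \<and> (\<forall>t>0.
           (\<lambda>x. complex_of_real (exp (- t * x) * x powr (\<beta> - 1)) * K_beta \<beta> (sqrt x) z)
             absolutely_integrable_on {0<..}
           \<and> integral {0<..}
               (\<lambda>x. complex_of_real (exp (- t * x) * x powr (\<beta> - 1)) * K_beta \<beta> (sqrt x) z)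
             = complex_of_real (t powr (- \<beta>)) * exp (- z / complex_of_real (sqrt t))
               * complex_of_real (exp (- 1 / (2 * t))))"
  proof -
  have A: "\<forall>r\<ge>0. summable (lhs_term \<beta> r z) \<and> summable (rhs_term \<beta> r z)
             \<and> (\<Sum>k. lhs_term \<beta> r z k) = (\<Sum>k. rhs_term \<beta> r z k)"
  proof (intro allI impI)
    fix r :: real
    assume "r \<ge> 0"
    note s1 = part1(1)[OF assms, of r z]
    note s2 = part1(2)[OF assms, of r z]
    show "summable (lhs_term \<beta> r z) \<and> summable (rhs_term \<beta> r z)
             \<and> (\<Sum>k. lhs_term \<beta> r z k) = (\<Sum>k. rhs_term \<beta> r z k)"
      using s1 s2 by (auto simp: sums_iff)
  qed
  have B: "\<forall>t>0.
           (\<lambda>x. complex_of_real (exp (- t * x) * x powr (\<beta> - 1)) * K_beta \<beta> (sqrt x) z)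
             absolutely_integrable_on {0<..}
           \<and> integral {0<..}
               (\<lambda>x. complex_of_real (exp (- t * x) * x powr (\<beta> - 1)) * K_beta \<beta> (sqrt x) z)
             = complex_of_real (t powr (- \<beta>)) * exp (- z / complex_of_real (sqrt t))
               * complex_of_real (exp (- 1 / (2 * t)))"
    using part2[OF assms] by blast
  show ?thesis using A B by blast
qed

end
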